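(* Let $K$ be a perfect field of characteristic $p>0$ and let $\theta:K[x]\to K[x^p]$, $\theta(f)=f^p+\frac{d^{p-1}f}{dx^{p-1}}$ (a bijection). Write $g\in K[x^p]$ as $g=\sum_{i=0}^{p-1}\mu_ix^{pi}$ with $\mu_i\in K[x^{p^2}]$, and write $\theta^{-1}(g)=\sum_{i=0}^{p-1}\lambda_ix^i$ with $\lambda_i\in K[x^p]$. Then (1) for $i=0,1,\dots,p-2$: $\displaystyle \lambda_i=\mu_i^{1/p}+F^{-1}\pi_iF^{-1}\sum_{j\ge0}\Delta^j(\mu_{p-1})$; (2) $\displaystyle \lambda_{p-1}=\sum_{i=0}^{p-2}x^{pi}\,\pi_iF^{-1}\sum_{j\ge0}\Delta^j(\mu_{p-1})+x^{p(p-1)}\sum_{j\ge1}\Delta^j(\mu_{p-1})$.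
   Context: $F^{-1}$ denotes the inverse of the Frobenius, applied to polynomials in $x^p$: $F^{-1}\big(\sum_j c_jx^{pj}\big)=\sum_j c_j^{1/p}x^{j}$ ($c_j\in K$); in particular $\mu_i^{1/p}:=F^{-1}(\mu_i)\in K[x^p]$, and $F^{-1}$ maps $K[x^{p^2}]\to K[x^p]$ and $K[x^p]\to K[x]$. For $i=0,\dots,p-1$, $\pi_i:K[x^p]\to K[x^{p^2}]$ is the map $\sum_{k=0}^{p-1}a_kx^{pk}\mapsto a_i$ ($a_k\in K[x^{p^2}]$), using $K[x^p]=\bigoplus_{k=0}^{p-1}K[x^{p^2}]x^{pk}$ (in the paper it is expressed as $\partial^{[pi]}\prod_{j\ne i}(x^p\partial^{[p]}-j)/\prod_{j\neq i}(i-j)$ with divided-power derivations $\partial^{[m]}=\frac{d^m}{dx^m}/m!$). $\Delta:=\partial^{[(p-1)p]}F^{-1}:K[x^{p^2}]\to K[x^{p^2}]$ is the $\mathbb{F}_p$-linear map $\sum_{i\ge0}a_ix^{p^2i}\mapsto\sum_{i\ge0}a_{p-1+pi}^{1/p}x^{p^2i}$ ($a_i\in K$), where $\partial^{[m]}(x^k)=\binom{k}{m}x^{k-m}$; $\Delta$ is locally nilpotent, so the sums over $j$ are finite. *)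

theory Defs
  imports "HOL-Computational_Algebra.Polynomial"
begin

text \<open>Polynomials lying in K[x^m]: only exponents divisible by m occur.\<close>
definition in_pow_ring :: "nat \<Rightarrow> 'a::zero poly \<Rightarrow> bool" where
  "in_pow_ring m f \<longleftrightarrow> (\<forall>n. coeff f n \<noteq> 0 \<longrightarrow> m dvd n)"

definition proot :: "nat \<Rightarrow> 'a::field \<Rightarrow> 'a" where
  "proot p c = (THE y. y ^ p = c)"

definition theta :: "nat \<Rightarrow> 'a::field poly \<Rightarrow> 'a poly" where
  "theta p f = f ^ p + (pderiv ^^ (p - 1)) f"

text \<open>Inverse Frobenius on K[x^p]: sum c_j x^(pj) maps to sum c_j^(1/p) x^j.\<close>
definition Finv :: "nat \<Rightarrow> 'a::field poly \<Rightarrow> 'a poly" where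
  "Finv p f = Poly (map (\<lambda>n. proot p (coeff f (p * n))) [0..<Suc (degree f)])"

text \<open>pi_i : K[x^p] -> K[x^(p^2)], sum_{k<p} a_k x^(pk) maps to a_i.\<close>
definition piP :: "nat \<Rightarrow> nat \<Rightarrow> 'a::field poly \<Rightarrow> 'a poly" where
  "piP p i f = Poly (map (\<lambda>n. if p ^ 2 dvd n then coeff f (n + p * i) else 0)
                        [0..<Suc (degree f)])"

text \<open>Delta : sum a_i x^(p^2 i) maps to sum a_(p-1+pi)^(1/p) x^(p^2 i).\<close>
definition Delta :: "nat \<Rightarrow> 'a::field poly \<Rightarrow> 'a poly" where
  "Delta p g = Poly (map (\<lambda>n. if p ^ 2 dvd n
                                then proot p (coeff g (p ^ 2 * (p - 1) + p * n)) else 0)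
                        [0..<Suc (degree g)])"

text \<open>sum_{j>=0} Delta^j(g); Delta lowers the degree of nonconstant polynomials and
  kills constants, so all terms with j > degree g vanish.\<close>
definition Dsum :: "nat \<Rightarrow> 'a::field poly \<Rightarrow> 'a poly" where
  "Dsum p g = (\<Sum>j\<le>degree g. (Delta p ^^ j) g)"

definition Dsum1 :: "nat \<Rightarrow> 'a::field poly \<Rightarrow> 'a poly" where
  "Dsum1 p g = (\<Sum>j\<in>{1..degree g}. (Delta p ^^ j) g)"

end

theory Submission imports Defs "HOL-Computational_Algebra.Primes" "HOL-Number_Theory.Residues"
begin
hide_const (open) UnivPoly.coeff UnivPoly.monom

lemma frob_add:
  fixes x y :: "'b::comm_semiring_1"
  assumes "CHAR('b) = p" "prime p"
  shows "(x + y) ^ p = x ^ p + y ^ p"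
  by (rule freshmans_dream) (simp_all add: assms)

lemma frob_sum:
  fixes f :: "'c \<Rightarrow> 'b::comm_semiring_1"
  assumes "CHAR('b) = p" "prime p"
  shows "sum f A ^ p = (\<Sum>i\<in>A. f i ^ p)"
  by (rule freshmans_dream_sum) (simp_all add: assms)

lemma frob_inj:
  fixes x y :: "'a::field"
  assumes "CHAR('a) = p" "prime p" "x ^ p = y ^ p"
  shows "x = y"
proof -
  have "((x - y) + y) ^ p = (x - y) ^ p + y ^ p" by (rule frob_add[OF assms(1,2)])
  then have "(x - y) ^ p = 0" using assms(3) by simp
  then show ?thesis by simp
qed

lemma proot_of_pow:
  fixes c :: "'a::field"
  assumes "CHAR('a) = p" "prime p"
  shows "proot p (c ^ p) = c"
  unfolding proot_def
  by (rule the_equality) (auto intro: frob_inj[OF assms])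

lemma proot_pow:
  fixes c :: "'a::field"
  assumes "CHAR('a) = p" "prime p" "surj (\<lambda>x::'a. x ^ p)"
  shows "proot p c ^ p = c"
proof -
  obtain y where "c = y ^ p" using assms(3) by (metis surjD)
  then show ?thesis using proot_of_pow[OF assms(1,2)] by simp
qed

lemma proot_0:
  assumes "CHAR('a::field) = p" "prime p"
  shows "proot p (0::'a) = 0"
  using proot_of_pow[OF assms, of 0] assms prime_gt_0_nat[of p] by (simp add: power_0_left)

lemma proot_add:
  fixes a b :: "'a::field"
  assumes "CHAR('a) = p" "prime p" "surj (\<lambda>x::'a. x ^ p)"
  shows "proot p (a + b) = proot p a + proot p b"
proof -
  have "(proot p a + proot p b) ^ p = a + b"
    using frob_add[OF assms(1,2)] proot_pow[OF assms] by simp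
  then show ?thesis using proot_of_pow[OF assms(1,2)] by metis
qed

lemma coeff_Poly_map_upt:
  "coeff (Poly (map h [0..<Suc d])) n = (if n \<le> d then h n else 0)"
  by (simp add: nth_default_def del: upt_Suc)

lemma coeff_Finv:
  assumes "CHAR('a::field) = p" "prime p"
  shows "coeff (Finv p (f::'a poly)) n = proot p (coeff f (p * n))"
proof -
  have "p > 0" using assms prime_gt_0_nat by auto
  show ?thesis
  proof (cases "n \<le> degree f")
    case False
    moreover have "n \<le> p * n" using \<open>p > 0\<close> by simp
    ultimately have "p * n > degree f" by linarith
    then show ?thesis using False unfolding Finv_def coeff_Poly_map_upt by (simp add: coeff_eq_0 proot_0[OF assms])
  qed (unfold Finv_def coeff_Poly_map_upt, simp)
qed

lemma coeff_piP:
  "coeff (piP p i (f::'a::field poly)) n = (if p ^ 2 dvd n then coeff f (n + p * i) else 0)"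
  unfolding piP_def coeff_Poly_map_upt by (auto simp: coeff_eq_0)

lemma coeff_Delta:
  assumes "CHAR('a::field) = p" "prime p"
  shows "coeff (Delta p (g::'a poly)) n =
     (if p ^ 2 dvd n then proot p (coeff g (p ^ 2 * (p - 1) + p * n)) else 0)"
proof -
  have "p > 0" using assms prime_gt_0_nat by auto
  show ?thesis
  proof (cases "n \<le> degree g")
    case False
    moreover have "n \<le> p * n" using \<open>p > 0\<close> by simp
    ultimately have "p ^ 2 * (p - 1) + p * n > degree g" by linarith
    then show ?thesis using False unfolding Delta_def coeff_Poly_map_upt by (simp add: coeff_eq_0 proot_0[OF assms])
  qed (unfold Delta_def coeff_Poly_map_upt, simp)
qed

lemma coeff_mult_monom1:
  "coeff ((a::'b::comm_semiring_1 poly) * monom 1 m) n = (if m \<le> n then coeff a (n - m) else 0)"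
  by (simp add: mult.commute[of a] coeff_monom_mult)

lemma in_pow_ringD: "in_pow_ring m f \<Longrightarrow> \<not> m dvd n \<Longrightarrow> coeff f n = 0"
  unfolding in_pow_ring_def by blast

lemma nt_aux:
  fixes p n k i :: nat
  assumes "p ^ 2 dvd n" "p ^ 2 dvd (n + p * k - p * i)" "p * i \<le> n + p * k" "i < p" "k < p"
  shows "i = k"
proof -
  have p0: "p > 0" using assms(4) by simp
  have "int (p ^ 2) dvd int (n + p * k - p * i)" using assms(2) by (simp only: of_nat_dvd_iff)
  also have "int (n + p * k - p * i) = int n + int p * (int k - int i)"
    using assms(3) by (simp add: of_nat_diff algebra_simps)
  finally have "int p * int p dvd int n + int p * (int k - int i)" by (simp add: power2_eq_square)
  moreover have "int p * int p dvd int n" using assms(1) by (simp add: power2_eq_square flip: of_nat_mult)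
  ultimately have "int p * int p dvd int p * (int k - int i)"
    using dvd_add_right_iff by blast
  then have d: "int p dvd (int k - int i)" using p0 by simp
  show ?thesis
  proof (rule ccontr)
    assume "i \<noteq> k"
    then have "int k - int i \<noteq> 0" by simp
    from dvd_imp_le_int[OF this d] have "\<bar>int p\<bar> \<le> \<bar>int k - int i\<bar>" .
    then show False using assms(4,5) by simp
  qed
qed

lemma decomp_unique:
  assumes "\<forall>i<p. in_pow_ring (p ^ 2) (a i)" "k < p"
  shows "piP p k (\<Sum>i<p. a i * monom 1 (p * i)) = a k"
proof (rule poly_eqI)
  fix n
  show "coeff (piP p k (\<Sum>i<p. a i * monom 1 (p * i))) n = coeff (a k) n"
  proof (cases "p ^ 2 dvd n")
    case True
    have "coeff (\<Sum>i<p. a i * monom 1 (p * i)) (n + p * k)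
        = (\<Sum>i<p. if i = k then coeff (a k) n else 0)"
      unfolding coeff_sum
    proof (rule sum.cong[OF refl])
      fix i assume i: "i \<in> {..<p}"
      show "coeff (a i * monom 1 (p * i)) (n + p * k) = (if i = k then coeff (a k) n else 0)"
      proof (cases "i = k")
        case False
        show ?thesis
        proof (cases "p * i \<le> n + p * k")
          case le: True
          have "\<not> p ^ 2 dvd (n + p * k - p * i)"
            using nt_aux[OF True _ le] i assms(2) False by auto
          then show ?thesis using le False assms(1) i in_pow_ringD[of "p^2" "a i" "n + p * k - p * i"]
            by (simp add: coeff_mult_monom1)
        qed (simp add: coeff_mult_monom1 False)
      qed (simp add: coeff_mult_monom1)
    qed
    also have "\<dots> = coeff (a k) n" using assms(2) by simp
    finally show ?thesis using True by (simp add: coeff_piP)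
  next
    case False
    then show ?thesis using assms in_pow_ringD[of "p^2" "a k" n] by (simp add: coeff_piP)
  qed
qed

lemma piP_in: "in_pow_ring (p ^ 2) (piP p i h)"
  unfolding in_pow_ring_def by (simp add: coeff_piP)

lemma decomp_exists:
  assumes "in_pow_ring p h" "p > 0"
  shows "h = (\<Sum>i<p. piP p i h * monom 1 (p * i))"
proof (rule poly_eqI)
  fix n
  have t: "coeff (piP p i h * monom 1 (p * i)) n =
      (if p * i \<le> n \<and> p ^ 2 dvd (n - p * i) then coeff h n else 0)" for i
    by (simp add: coeff_mult_monom1 coeff_piP)
  show "coeff h n = coeff (\<Sum>i<p. piP p i h * monom 1 (p * i)) n"
  proof (cases "p dvd n")
    case False
    then have "coeff h n = 0" using assms(1) by (simp add: in_pow_ringD)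
    have "(\<Sum>i<p. if p * i \<le> n \<and> p ^ 2 dvd (n - p * i) then coeff h n else 0) = 0"
      by (intro sum.neutral) (simp add: \<open>coeff h n = 0\<close>)
    then show ?thesis unfolding coeff_sum t using \<open>coeff h n = 0\<close> by simp
  next
    case True
    then obtain q where q: "n = p * q" by blast
    have c: "(p * i \<le> n \<and> p ^ 2 dvd (n - p * i)) \<longleftrightarrow> i = q mod p" if "i < p" for i
    proof
      assume h: "p * i \<le> n \<and> p ^ 2 dvd (n - p * i)"
      then have "i \<le> q" using q assms(2) by simp
      have "n - p * i = p * (q - i)" using q by (simp add: diff_mult_distrib2)
      then have "p * p dvd p * (q - i)" using h by (simp add: power2_eq_square)
      then have "p dvd (q - i)" using assms(2) by simp
      then have "(q - i) mod p = 0" by simp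
      then show "i = q mod p" using \<open>i \<le> q\<close> that
        by (metis le_add_diff_inverse2 mod_add_left_eq mod_less add_0)
    next
      assume h: "i = q mod p"
      then have "i \<le> q" by simp
      have "q - q mod p = p * (q div p)" by (simp add: minus_mod_eq_mult_div)
      then have "n - p * i = p * (p * (q div p))" using q h
        by (metis diff_mult_distrib2)
      then show "p * i \<le> n \<and> p ^ 2 dvd (n - p * i)" using q \<open>i \<le> q\<close>
        by (simp add: power2_eq_square)
    qed
    have "coeff (\<Sum>i<p. piP p i h * monom 1 (p * i)) n = (\<Sum>i<p. if i = q mod p then coeff h n else 0)"
      unfolding coeff_sum t using c by (intro sum.cong) auto
    also have "\<dots> = coeff h n" using assms(2) by simp
    finally show ?thesis ..
  qed
qed

lemma piP_add: "piP p i (a + b) = piP p i a + piP p i (b::'a::field poly)"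
  by (rule poly_eqI) (simp add: coeff_piP)

lemma piP_diff: "piP p i (a - b) = piP p i a - piP p i (b::'a::field poly)"
  by (rule poly_eqI) (simp add: coeff_piP)

lemma piP_sum: "piP p i (sum f A) = (\<Sum>x\<in>A. piP p i (f x :: 'a::field poly))"
  by (rule poly_eqI) (simp add: coeff_piP coeff_sum)

lemma Finv_add:
  assumes "CHAR('a::field) = p" "prime p" "surj (\<lambda>x::'a. x ^ p)"
  shows "Finv p (a + b) = Finv p a + Finv p (b::'a poly)"
  by (rule poly_eqI) (simp add: coeff_Finv[OF assms(1,2)] proot_add[OF assms])

lemma Delta_add:
  assumes "CHAR('a::field) = p" "prime p" "surj (\<lambda>x::'a. x ^ p)"
  shows "Delta p (a + b) = Delta p a + Delta p (b::'a poly)"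
  by (rule poly_eqI) (simp add: coeff_Delta[OF assms(1,2)] proot_add[OF assms])

lemma Delta_0:
  assumes "CHAR('a::field) = p" "prime p"
  shows "Delta p (0::'a poly) = 0"
  by (rule poly_eqI) (simp add: coeff_Delta[OF assms(1,2)] proot_0[OF assms])

lemma Delta_sum:
  assumes "CHAR('a::field) = p" "prime p" "surj (\<lambda>x::'a. x ^ p)"
  shows "Delta p (sum f A) = (\<Sum>x\<in>A. Delta p (f x :: 'a poly))"
  by (induction A rule: infinite_finite_induct) (simp_all add: Delta_0[OF assms(1,2)] Delta_add[OF assms])

lemma Delta_diff:
  assumes "CHAR('a::field) = p" "prime p" "surj (\<lambda>x::'a. x ^ p)"
  shows "Delta p (a - b) = Delta p a - Delta p (b::'a poly)"
  using Delta_add[OF assms, of "a - b" b] by (simp add: algebra_simps)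

lemma coeff_pow_p:
  assumes "CHAR('a::field) = p" "prime p"
  shows "coeff ((a::'a poly) ^ p) n = (if p dvd n then coeff a (n div p) ^ p else 0)"
proof -
  have p0: "p > 0" using assms prime_gt_0_nat by auto
  have cp: "CHAR('a poly) = p" using assms(1) by simp
  have "a ^ p = (\<Sum>k\<le>degree a. monom (coeff a k) k) ^ p"
    by (simp add: poly_as_sum_of_monoms)
  also have "\<dots> = (\<Sum>k\<le>degree a. monom (coeff a k ^ p) (k * p))"
    by (simp add: frob_sum[OF cp assms(2)] monom_power)
  finally have e: "coeff (a ^ p) n = (\<Sum>k\<le>degree a. if k * p = n then coeff a k ^ p else 0)"
    by (simp add: coeff_sum coeff_monom)
  show ?thesis
  proof (cases "p dvd n")
    case True
    then obtain q where q: "n = p * q" by blast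
    have "(\<Sum>k\<le>degree a. if k * p = n then coeff a k ^ p else 0) =
          (\<Sum>k\<le>degree a. if k = q then coeff a k ^ p else 0)"
      using q p0 by (intro sum.cong) (auto simp: mult.commute)
    also have "\<dots> = (if q \<le> degree a then coeff a q ^ p else 0)"
      by simp
    also have "\<dots> = coeff a q ^ p"
      using p0 coeff_eq_0[of a q] by (simp add: power_0_left)
    finally show ?thesis using e True q p0 by simp
  next
    case False
    have "(\<Sum>k\<le>degree a. if k * p = n then coeff a k ^ p else 0) = 0"
      using False by (intro sum.neutral) auto
    then show ?thesis using e False by simp
  qed
qed

lemma Finv_pow:
  assumes "CHAR('a::field) = p" "prime p"
  shows "Finv p ((a::'a poly) ^ p) = a"
proof -
  have p0: "p > 0" using assms prime_gt_0_nat by auto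
  show ?thesis
    by (rule poly_eqI) (simp add: coeff_Finv[OF assms] coeff_pow_p[OF assms] proot_of_pow[OF assms] p0)
qed

lemma pow_in:
  assumes "CHAR('a::field) = p" "prime p" "in_pow_ring p (a::'a poly)"
  shows "in_pow_ring (p ^ 2) (a ^ p)"
  unfolding in_pow_ring_def
proof (intro allI impI)
  fix n assume "coeff (a ^ p) n \<noteq> 0"
  then have "p dvd n" "coeff a (n div p) \<noteq> 0" using prime_gt_0_nat[OF assms(2)] by (auto simp: coeff_pow_p[OF assms(1,2)] split: if_splits)
  then have "p dvd n div p" using assms(3) unfolding in_pow_ring_def by blast
  moreover obtain m where m: "n = p * m" using \<open>p dvd n\<close> by blast
  ultimately obtain r where "m = p * r" using prime_gt_0_nat[OF assms(2)] by auto
  then show "p ^ 2 dvd n" using m by (simp add: power2_eq_square)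
qed

lemma Delta_eq:
  assumes "CHAR('a::field) = p" "prime p"
  shows "Delta p (h::'a poly) = piP p (p - 1) (Finv p h)"
  by (rule poly_eqI) (simp add: coeff_Delta[OF assms] coeff_piP coeff_Finv[OF assms] algebra_simps power2_eq_square)

lemma Delta_coeff_lt:
  assumes "CHAR('a::field) = p" "prime p" "coeff (Delta p (h::'a poly)) n \<noteq> 0"
  shows "n < degree h"
proof -
  have p2: "p \<ge> 2" using assms prime_ge_2_nat by auto
  have "coeff h (p ^ 2 * (p - 1) + p * n) \<noteq> 0"
    using assms(3) by (auto simp: coeff_Delta[OF assms(1,2)] proot_0[OF assms(1,2)] split: if_splits)
  then have "p ^ 2 * (p - 1) + p * n \<le> degree h" by (rule le_degree)
  moreover have "p ^ 2 * (p - 1) \<ge> 1" using p2 by simp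
  moreover have "p * n \<ge> n" using p2 by simp
  ultimately show ?thesis by linarith
qed

lemma Delta_pow_0:
  assumes "CHAR('a::field) = p" "prime p"
  shows "(Delta p ^^ k) (0::'a poly) = 0"
  by (induction k) (simp_all add: Delta_0[OF assms])

lemma Delta_nilp:
  assumes "CHAR('a::field) = p" "prime p"
  shows "k > degree (h::'a poly) \<Longrightarrow> (Delta p ^^ k) h = 0"
proof (induction k arbitrary: h)
  case 0 then show ?case by simp
next
  case (Suc k)
  show ?case
  proof (cases "Delta p h = 0")
    case True
    have "(Delta p ^^ k) (0::'a poly) = 0" by (rule Delta_pow_0[OF assms])
    then show ?thesis using True by (simp add: funpow_Suc_right del: funpow.simps)
  next
    case False
    then have "degree (Delta p h) < degree h"
      using Delta_coeff_lt[OF assms, of h "degree (Delta p h)"] by simp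
    then have "(Delta p ^^ k) (Delta p h) = 0" using Suc by (intro Suc.IH) simp
    then show ?thesis by (simp add: funpow_Suc_right del: funpow.simps)
  qed
qed

lemma pderiv_in:
  assumes "CHAR('a::field) = p" "in_pow_ring p (a::'a poly)"
  shows "pderiv a = 0"
proof (rule poly_eqI)
  fix n
  show "coeff (pderiv a) n = coeff 0 n"
  proof (cases "p dvd Suc n")
    case True
    then have "of_nat (Suc n) = (0::'a)" using assms(1) of_nat_eq_0_iff_char_dvd by blast
    then show ?thesis by (simp add: coeff_pderiv)
  next
    case False
    then show ?thesis using assms(2) in_pow_ringD[of p a "Suc n"] by (simp add: coeff_pderiv)
  qed
qed

lemma hpderiv_mult_const:
  assumes "pderiv (a::'a::field poly) = 0"
  shows "(pderiv ^^ k) (a * b) = a * (pderiv ^^ k) b"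
proof (induction k arbitrary: b)
  case 0 then show ?case by simp
next
  case (Suc k)
  have "(pderiv ^^ Suc k) (a * b) = (pderiv ^^ k) (pderiv (a * b))"
    by (simp add: funpow_Suc_right del: funpow.simps)
  also have "pderiv (a * b) = a * pderiv b" by (simp add: pderiv_mult assms)
  also have "(pderiv ^^ k) (a * pderiv b) = a * (pderiv ^^ k) (pderiv b)" by (rule Suc.IH)
  also have "(pderiv ^^ k) (pderiv b) = (pderiv ^^ Suc k) b"
    by (simp add: funpow_Suc_right del: funpow.simps)
  finally show ?case .
qed

lemma hpderiv_monom_small:
  assumes "i < k"
  shows "(pderiv ^^ k) (monom (1::'a::field) i) = 0"
  by (rule poly_eqI) (use assms in \<open>simp add: coeff_higher_pderiv coeff_monom\<close>)

lemma poch1: "pochhammer (1::'a::comm_semiring_1) k = of_nat (fact k)"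
  using pochhammer_of_nat[of 1 k, where 'a='a] pochhammer_fact[of k, where 'a=nat] by simp

lemma hpderiv_monom_eq:
  "(pderiv ^^ k) (monom (1::'a::field) k) = [:of_nat (fact k):]"
  by (rule poly_eqI) (simp add: coeff_higher_pderiv coeff_monom poch1 coeff_pCons split: nat.splits)

lemma wilson_field:
  assumes "CHAR('a::field) = p" "prime p"
  shows "(of_nat (fact (p - 1)) :: 'a) = -1"
proof -
  have "[fact (p - 1) = - 1] (mod int p)" by (rule wilson_theorem[OF assms(2)])
  then have "int p dvd (fact (p - 1) - (- 1))" by (simp only: cong_iff_dvd_diff)
  then have "of_int (fact (p - 1)) + 1 = (0::'a)"
    using assms(1) of_int_eq_0_iff_char_dvd[where 'a='a, of "fact (p - 1) + 1"] by simp
  moreover have "(of_int (fact (p - 1) :: int) :: 'a) = of_nat (fact (p - 1))"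
    by (metis of_int_of_nat_eq of_nat_fact)
  ultimately have "of_nat (fact (p - 1)) + 1 = (0::'a)" by simp
  then show ?thesis by (simp add: eq_neg_iff_add_eq_0)
qed

lemma theta_decomp:
  assumes "CHAR('a::field) = p" "prime p"
    and "\<forall>i<p. in_pow_ring p (lam i)"
    and "f = (\<Sum>i<p. lam i * monom (1::'a) i)"
  shows "theta p f = (\<Sum>i<p. lam i ^ p * monom 1 (p * i)) - lam (p - 1)"
proof -
  have p0: "p > 0" using assms(2) prime_gt_0_nat by auto
  have cp: "CHAR('a poly) = p" using assms(1) by simp
  have "f ^ p = (\<Sum>i<p. (lam i * monom 1 i) ^ p)"
    unfolding assms(4) by (rule frob_sum[OF cp assms(2)])
  also have "\<dots> = (\<Sum>i<p. lam i ^ p * monom 1 (p * i))"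
    by (simp add: power_mult_distrib monom_power mult.commute)
  finally have fp: "f ^ p = (\<Sum>i<p. lam i ^ p * monom 1 (p * i))" .
  have "(pderiv ^^ (p - 1)) f = (\<Sum>i<p. lam i * (pderiv ^^ (p - 1)) (monom 1 i))"
    unfolding assms(4) higher_pderiv_sum
    using hpderiv_mult_const[OF pderiv_in[OF assms(1)]] assms(3) by simp
  also have "\<dots> = (\<Sum>i<p. if i = p - 1 then lam (p - 1) * [:of_nat (fact (p - 1)):] else 0)"
  proof (rule sum.cong[OF refl])
    fix i assume "i \<in> {..<p}"
    then have "i < p - 1 \<or> i = p - 1" by auto
    then show "lam i * (pderiv ^^ (p - 1)) (monom 1 i) =
        (if i = p - 1 then lam (p - 1) * [:of_nat (fact (p - 1)):] else 0)"
      by (auto simp: hpderiv_monom_small hpderiv_monom_eq)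
  qed
  also have "\<dots> = lam (p - 1) * [:of_nat (fact (p - 1)):]" using p0 by simp
  also have "\<dots> = - lam (p - 1)" unfolding wilson_field[OF assms(1,2)] by simp
  finally show ?thesis unfolding theta_def fp by simp
qed

theorem proposition2p2:
  fixes p :: nat and g f :: "'a::field poly" and mu lam :: "nat \<Rightarrow> 'a poly"
  assumes char: "CHAR('a) = p" and ppos: "p > 0"
    and perfect: "surj (\<lambda>x::'a. x ^ p)"
    and g_xp: "in_pow_ring p g"
    and mu_xp2: "\<forall>i<p. in_pow_ring (p ^ 2) (mu i)"
    and g_decomp: "g = (\<Sum>i<p. mu i * monom 1 (p * i))"
    and f_inv: "theta p f = g"
    and lam_xp: "\<forall>i<p. in_pow_ring p (lam i)"
    and f_decomp: "f = (\<Sum>i<p. lam i * monom 1 i)"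
  shows "(\<forall>i \<le> p - 2. lam i = Finv p (mu i) + Finv p (piP p i (Finv p (Dsum p (mu (p - 1))))))
       \<and> lam (p - 1) = (\<Sum>i\<le>p - 2. monom 1 (p * i) * piP p i (Finv p (Dsum p (mu (p - 1)))))
                       + monom 1 (p * (p - 1)) * Dsum1 p (mu (p - 1))"
proof -
  have pr: "prime p" using prime_CHAR_semidom[where 'a='a] char ppos by simp
  have p2: "p \<ge> 2" using prime_ge_2_nat[OF pr] .
  define c where "c i = piP p i (lam (p - 1))" for i
  have lamdec: "lam (p - 1) = (\<Sum>i<p. c i * monom 1 (p * i))"
    unfolding c_def by (rule decomp_exists) (use lam_xp ppos in auto)
  have th: "g = (\<Sum>i<p. lam i ^ p * monom 1 (p * i)) - lam (p - 1)"
    using theta_decomp[OF char pr lam_xp f_decomp] f_inv by simp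
  have powin: "\<forall>i<p. in_pow_ring (p ^ 2) (lam i ^ p)"
    using pow_in[OF char pr] lam_xp by blast
  have mu_eq: "mu k = lam k ^ p - c k" if "k < p" for k
  proof -
    have "mu k = piP p k g" unfolding g_decomp by (rule decomp_unique[symmetric]) (use mu_xp2 that in auto)
    also have "\<dots> = lam k ^ p - c k"
      unfolding th piP_diff c_def using decomp_unique[OF powin that] by simp
    finally show ?thesis .
  qed
  have lamk: "lam k = Finv p (mu k + c k)" if "k < p" for k
    using mu_eq[OF that] Finv_pow[OF char pr, of "lam k"] by simp
  define m where "m = mu (p - 1)"
  define C where "C = c (p - 1)"
  have C_eq: "C = Delta p m + Delta p C"
  proof -
    have "C = piP p (p - 1) (lam (p - 1))" unfolding C_def c_def ..
    also have "\<dots> = piP p (p - 1) (Finv p (m + C))" using lamk[of "p - 1"] ppos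
      unfolding m_def C_def by simp
    also have "\<dots> = Delta p (m + C)" by (rule Delta_eq[OF char pr, symmetric])
    finally show ?thesis by (simp add: Delta_add[OF char pr perfect])
  qed
  define d where "d = degree m"
  have D_eq: "Dsum1 p m = Delta p m + Delta p (Dsum1 p m)"
  proof -
    have "Delta p (Dsum1 p m) = (\<Sum>j\<in>{1..d}. (Delta p ^^ Suc j) m)"
      unfolding Dsum1_def d_def[symmetric] Delta_sum[OF char pr perfect] by simp
    also have "\<dots> = (\<Sum>j\<in>{Suc 1..Suc d}. (Delta p ^^ j) m)"
      by (rule sum.shift_bounds_cl_Suc_ivl[symmetric])
    finally have "Delta p m + Delta p (Dsum1 p m) = (Delta p ^^ 1) m + (\<Sum>j\<in>{Suc 1..Suc d}. (Delta p ^^ j) m)"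
      by simp
    also have "\<dots> = (\<Sum>j\<in>{1..Suc d}. (Delta p ^^ j) m)"
      by (rule sum.atLeast_Suc_atMost[symmetric]) simp
    also have "\<dots> = (\<Sum>j\<in>{1..d}. (Delta p ^^ j) m) + (Delta p ^^ Suc d) m" by simp
    also have "(Delta p ^^ Suc d) m = 0" by (rule Delta_nilp[OF char pr]) (simp add: d_def)
    finally show ?thesis unfolding Dsum1_def d_def by simp
  qed
  have C_D: "C = Dsum1 p m"
  proof -
    define e where "e = C - Dsum1 p m"
    have De: "Delta p e = e"
    proof -
      have "Delta p e = Delta p C - Delta p (Dsum1 p m)" unfolding e_def by (rule Delta_diff[OF char pr perfect])
      also have "\<dots> = C - Dsum1 p m" using C_eq D_eq by (metis add_diff_cancel_left)
      finally show ?thesis unfolding e_def .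
    qed
    have "(Delta p ^^ k) e = e" for k
      by (induction k) (simp_all add: De)
    moreover have "(Delta p ^^ Suc (degree e)) e = 0" by (rule Delta_nilp[OF char pr]) simp
    ultimately have "e = 0" by metis
    then show ?thesis unfolding e_def by simp
  qed
  have Dsum_eq: "Dsum p m = m + Dsum1 p m"
  proof -
    have "Dsum p m = (\<Sum>j\<in>{0..degree m}. (Delta p ^^ j) m)" unfolding Dsum_def atMost_atLeast0 ..
    also have "\<dots> = (Delta p ^^ 0) m + (\<Sum>j\<in>{Suc 0..degree m}. (Delta p ^^ j) m)"
      by (rule sum.atLeast_Suc_atMost) simp
    finally show ?thesis unfolding Dsum1_def by simp
  qed
  have eD: "Dsum p m = m + C" using Dsum_eq C_D by simp
  have lamlast: "lam (p - 1) = Finv p (Dsum p m)"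
    using lamk[of "p - 1"] ppos eD unfolding m_def C_def by simp
  have c_eq: "c i = piP p i (Finv p (Dsum p m))" for i
    unfolding c_def lamlast ..
  have part1: "\<forall>i \<le> p - 2. lam i = Finv p (mu i) + Finv p (piP p i (Finv p (Dsum p (mu (p - 1)))))"
  proof (intro allI impI)
    fix i assume "i \<le> p - 2"
    then have "i < p" using p2 by simp
    then show "lam i = Finv p (mu i) + Finv p (piP p i (Finv p (Dsum p (mu (p - 1)))))"
      using lamk[of i] Finv_add[OF char pr perfect] c_eq m_def by simp
  qed
  have split: "{..<p} = insert (p - 1) {..p - 2}" using p2 by auto
  have "lam (p - 1) = (\<Sum>i<p. c i * monom 1 (p * i))" by (rule lamdec)
  also have "\<dots> = c (p - 1) * monom 1 (p * (p - 1)) + (\<Sum>i\<le>p - 2. c i * monom 1 (p * i))"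
    unfolding split by (subst sum.insert) (use p2 in auto)
  also have "\<dots> = (\<Sum>i\<le>p - 2. monom 1 (p * i) * piP p i (Finv p (Dsum p (mu (p - 1)))))
                       + monom 1 (p * (p - 1)) * Dsum1 p (mu (p - 1))"
    using C_D unfolding C_def m_def c_eq by (simp add: mult.commute)
  finally show ?thesis using part1 by blast
qed

end
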